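(* Let $\psi$ be an $n$-dimensional unique sink orientation, run Algorithm 1 on $\psi$ from a starting vertex $v^0$, and let $\rho$ be the iteration in which it terminates. Then $\rho \leq |r_\psi(v^0)|$.
   Context: Let $Q^n = 2^{[n]}$ be the vertex set of the $n$-cube, with $u,v$ adjacent iff $|u\oplus v|=1$; faces are $F_{J,v}=\{u : v\oplus u\subseteq J\}$ for $J\subseteq[n]$. A unique sink orientation (USO) is an orientation of the cube's edges such that every nonempty face has a unique sink (vertex with no outgoing edges within the face). The outmap $s_\psi(v)$ is the set of coordinates $j$ such that the edge $\{v,v\oplus\{j\}\}$ is directed away from $v$. The reachmap is $r_\psi(v)=s_\psi(v)\cup\{j : \exists u \text{ reachable from } v \text{ by a directed path with } j\in s_\psi(u)\}$. Algorithm 1: given a starting vertex $v^0$, set $E^0=\emptyset$ and $j=0$; while $s_\psi(v^j)\neq\emptyset$: pick any $b\in s_\psi(v^j)$, let $v^{j+1}$ be the sink of the face $F_{E^j, v^j\oplus\{b\}}$ (computed by the Fibonacci Seesaw algorithm of Szabó and Welzl), set $E^{j+1}=E^j\cup\{b\}$ and $j\leftarrow j+1$. The algorithm terminates at iteration $\rho$ when $s_\psi(v^\rho)=\emptyset$. *)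

theory Defs
  imports Main
begin

text \<open>Vertices of the n-cube are subsets of [n] = {0..<n}; an orientation is given
by its outmap s (the set of coordinates whose edge points away from the vertex).\<close>

definition symdiff :: "nat set \<Rightarrow> nat set \<Rightarrow> nat set" where
  "symdiff u v = (u - v) \<union> (v - u)"

definition cube :: "nat \<Rightarrow> nat set set" where
  "cube n = Pow {0..<n}"

definition face :: "nat \<Rightarrow> nat set \<Rightarrow> nat set \<Rightarrow> nat set set" where
  "face n J v = {u \<in> cube n. symdiff v u \<subseteq> J}"

definition is_orientation :: "nat \<Rightarrow> (nat set \<Rightarrow> nat set) \<Rightarrow> bool" where
  "is_orientation n s \<longleftrightarrow>
     (\<forall>v \<in> cube n. s v \<subseteq> {0..<n} \<and>
        (\<forall>j < n. j \<in> s v \<longleftrightarrow> j \<notin> s (symdiff v {j})))"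

definition is_face_sink :: "nat \<Rightarrow> (nat set \<Rightarrow> nat set) \<Rightarrow> nat set \<Rightarrow> nat set \<Rightarrow> nat set \<Rightarrow> bool" where
  "is_face_sink n s J v u \<longleftrightarrow> u \<in> face n J v \<and> s u \<inter> J = {}"

definition is_USO :: "nat \<Rightarrow> (nat set \<Rightarrow> nat set) \<Rightarrow> bool" where
  "is_USO n s \<longleftrightarrow> is_orientation n s \<and>
     (\<forall>J \<subseteq> {0..<n}. \<forall>v \<in> cube n. \<exists>!u. is_face_sink n s J v u)"

definition dstep :: "(nat set \<Rightarrow> nat set) \<Rightarrow> nat set \<Rightarrow> nat set \<Rightarrow> bool" where
  "dstep s u w \<longleftrightarrow> (\<exists>j \<in> s u. w = symdiff u {j})"

definition reachmap :: "(nat set \<Rightarrow> nat set) \<Rightarrow> nat set \<Rightarrow> nat set" where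
  "reachmap s v = s v \<union> {j. \<exists>u. (dstep s)\<^sup>*\<^sup>* v u \<and> j \<in> s u}"

text \<open>A (terminating) run of Algorithm 1 from v0 ending at iteration rho:
vertices vs, direction sets E, chosen coordinates b. The sink of the face is
unique in a USO, so it is what the Fibonacci Seesaw returns.\<close>
definition alg1_run :: "nat \<Rightarrow> (nat set \<Rightarrow> nat set) \<Rightarrow> nat set \<Rightarrow>
    (nat \<Rightarrow> nat set) \<Rightarrow> (nat \<Rightarrow> nat set) \<Rightarrow> (nat \<Rightarrow> nat) \<Rightarrow> nat \<Rightarrow> bool" where
  "alg1_run n s v0 vs E b rho \<longleftrightarrow>
     vs 0 = v0 \<and> E 0 = {} \<and>
     (\<forall>j < rho. s (vs j) \<noteq> {} \<and> b j \<in> s (vs j) \<and>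
        is_face_sink n s (E j) (symdiff (vs j) {b j}) (vs (Suc j)) \<and>
        E (Suc j) = E j \<union> {b j}) \<and>
     s (vs rho) = {}"

end

theory Submission
  imports Defs
begin

lemma sd_cube: "v \<in> cube n \<Longrightarrow> j < n \<Longrightarrow> symdiff v {j} \<in> cube n"
  by (auto simp: cube_def symdiff_def)

lemma dstep_cube: "is_orientation n s \<Longrightarrow> u \<in> cube n \<Longrightarrow> dstep s u w \<Longrightarrow> w \<in> cube n"
  unfolding dstep_def is_orientation_def using sd_cube by fastforce

lemma rt_cube: "(dstep s)\<^sup>*\<^sup>* u w \<Longrightarrow> is_orientation n s \<Longrightarrow> u \<in> cube n \<Longrightarrow> w \<in> cube n"
  by (induction rule: rtranclp_induct) (auto intro: dstep_cube)

lemma sink_unique: "is_USO n s \<Longrightarrow> J \<subseteq> {0..<n} \<Longrightarrow> v \<in> cube n \<Longrightarrow>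
   is_face_sink n s J v u \<Longrightarrow> is_face_sink n s J v w \<Longrightarrow> u = w"
  unfolding is_USO_def by blast

lemma sink_ex: "is_USO n s \<Longrightarrow> J \<subseteq> {0..<n} \<Longrightarrow> v \<in> cube n \<Longrightarrow>
   \<exists>u. is_face_sink n s J v u"
  unfolding is_USO_def by blast

lemma reach_sink:
  assumes U: "is_USO n s" and fin: "finite J"
  shows "J \<subseteq> {0..<n} \<Longrightarrow> x \<in> cube n \<Longrightarrow> is_face_sink n s J x u \<Longrightarrow> (dstep s)\<^sup>*\<^sup>* x u"
  using fin
proof (induction J arbitrary: x u rule: finite_induct)
  case empty
  then have "u = x" by (auto simp: is_face_sink_def face_def symdiff_def)
  then show ?case by simp
next
  case (insert k J)
  have O: "is_orientation n s" using U by (simp add: is_USO_def)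
  have Jn: "J \<subseteq> {0..<n}" and kn: "k < n" using insert.prems by auto
  obtain t where t: "is_face_sink n s J x t" using sink_ex[OF U Jn insert.prems(2)] by blast
  have xt: "(dstep s)\<^sup>*\<^sup>* x t" using insert.IH[OF Jn insert.prems(2) t] .
  have tc: "t \<in> cube n" using t by (auto simp: is_face_sink_def face_def)
  have u: "u \<in> face n (insert k J) x" "s u \<inter> insert k J = {}"
    using insert.prems(3) by (auto simp: is_face_sink_def)
  show ?case
  proof (cases "k \<in> s t")
    case False
    have "is_face_sink n s (insert k J) x t"
      using t False by (auto simp: is_face_sink_def face_def)
    then have "t = u" using sink_unique[OF U insert.prems(1,2) _ insert.prems(3)] by blast
    then show ?thesis using xt by simp
  next
    case True
    define t' where "t' = symdiff t {k}"
    have tt': "dstep s t t'" using True by (auto simp: dstep_def t'_def)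
    have t'c: "t' \<in> cube n" using sd_cube[OF tc kn] t'_def by simp
    obtain t'' where t'': "is_face_sink n s J t' t''" using sink_ex[OF U Jn t'c] by blast
    have t't'': "(dstep s)\<^sup>*\<^sup>* t' t''" using insert.IH[OF Jn t'c t''] .
    show ?thesis
    proof (cases "k \<in> s t''")
      case False
      have "is_face_sink n s (insert k J) x t''"
        using t'' t False by (auto simp: is_face_sink_def face_def t'_def symdiff_def)
      then have "t'' = u" using sink_unique[OF U insert.prems(1,2) _ insert.prems(3)] by blast
      then show ?thesis using xt tt' t't'' by (metis rtranclp.rtrancl_into_rtrancl rtranclp_trans)
    next
      case True2: True
      show ?thesis
      proof (cases "k \<in> symdiff x u")
        case False
        have "is_face_sink n s J x u" using u False
          by (auto simp: is_face_sink_def face_def)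
        then have "u = t" using sink_unique[OF U Jn insert.prems(2) _ t] by blast
        then show ?thesis using True u by auto
      next
        case kin: True
        have "is_face_sink n s J t' u" using u kin t insert.hyps(2)
          by (auto simp: is_face_sink_def face_def t'_def symdiff_def)
        then have "u = t''" using sink_unique[OF U Jn t'c _ t''] by blast
        then show ?thesis using True2 u by auto
      qed
    qed
  qed
qed

theorem lemma18:
  fixes n :: nat and s :: "nat set \<Rightarrow> nat set" and v0 :: "nat set"
    and vs E :: "nat \<Rightarrow> nat set" and b :: "nat \<Rightarrow> nat" and rho :: nat
  assumes "is_USO n s"
    and "v0 \<in> cube n"
    and "alg1_run n s v0 vs E b rho"
  shows "rho \<le> card (reachmap s v0)"
proof -
  note U = assms(1)
  have O: "is_orientation n s" using U by (simp add: is_USO_def)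
  have R: "vs 0 = v0" "E 0 = {}"
    "\<And>j. j < rho \<Longrightarrow> s (vs j) \<noteq> {} \<and> b j \<in> s (vs j) \<and>
        is_face_sink n s (E j) (symdiff (vs j) {b j}) (vs (Suc j)) \<and>
        E (Suc j) = E j \<union> {b j}"
    using assms(3) by (auto simp: alg1_run_def)
  have inv: "j \<le> rho \<Longrightarrow> vs j \<in> cube n \<and> s (vs j) \<inter> E j = {} \<and> E j \<subseteq> {0..<n} \<and>
      finite (E j) \<and> card (E j) = j \<and> E j \<subseteq> reachmap s v0 \<and> (dstep s)\<^sup>*\<^sup>* v0 (vs j)" for j
  proof (induction j)
    case 0
    then show ?case using R assms(2) by auto
  next
    case (Suc j)
    then have IH: "vs j \<in> cube n" "s (vs j) \<inter> E j = {}" "E j \<subseteq> {0..<n}" "finite (E j)"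
      "card (E j) = j" "E j \<subseteq> reachmap s v0" "(dstep s)\<^sup>*\<^sup>* v0 (vs j)" and jr: "j < rho" by auto
    note Rj = R(3)[OF jr]
    have bs: "b j \<in> s (vs j)" using Rj by blast
    have sv: "s (vs j) \<subseteq> {0..<n}" using O IH(1) by (simp add: is_orientation_def)
    have bn: "b j < n" using bs sv by auto
    have bE: "b j \<notin> E j" using IH(2) bs by auto
    have ES: "E (Suc j) = insert (b j) (E j)" using Rj by auto
    define w where "w = symdiff (vs j) {b j}"
    have wc: "w \<in> cube n" using sd_cube[OF IH(1) bn] w_def by simp
    have sk: "is_face_sink n s (E j) w (vs (Suc j))" using Rj w_def by simp
    have step1: "dstep s (vs j) w" using bs by (auto simp: dstep_def w_def)
    have step2: "(dstep s)\<^sup>*\<^sup>* w (vs (Suc j))" using reach_sink[OF U IH(4) IH(3) wc sk] .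
    have reach: "(dstep s)\<^sup>*\<^sup>* v0 (vs (Suc j))"
      using IH(7) step1 step2 by (metis rtranclp.rtrancl_into_rtrancl rtranclp_trans)
    have vc: "vs (Suc j) \<in> cube n" using sk by (auto simp: is_face_sink_def face_def)
    have ESn: "E (Suc j) \<subseteq> {0..<n}" using ES IH(3) bn by auto
    have bR: "b j \<in> reachmap s v0" using IH(7) bs by (auto simp: reachmap_def)
    obtain u where u: "is_face_sink n s (E (Suc j)) (vs j) u" using sink_ex[OF U ESn IH(1)] by blast
    have sinkS: "s (vs (Suc j)) \<inter> E (Suc j) = {}"
    proof (cases "b j \<in> symdiff (vs j) u")
      case False
      have "is_face_sink n s (E j) (vs j) u" using u False ES
        by (auto simp: is_face_sink_def face_def)
      moreover have "is_face_sink n s (E j) (vs j) (vs j)" using IH(1,2)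
        by (auto simp: is_face_sink_def face_def symdiff_def)
      ultimately have "u = vs j" using sink_unique[OF U IH(3) IH(1)] by blast
      then show ?thesis using u bs ES by (auto simp: is_face_sink_def)
    next
      case True
      have "is_face_sink n s (E j) w u" using u True ES bE
        by (auto simp: is_face_sink_def face_def w_def symdiff_def)
      then have "u = vs (Suc j)" using sink_unique[OF U IH(3) wc _ sk] by blast
      then show ?thesis using u by (auto simp: is_face_sink_def)
    qed
    show ?case using vc sinkS ESn IH ES bE bR reach by auto
  qed
  have "finite (reachmap s v0)"
  proof (rule finite_subset)
    show "reachmap s v0 \<subseteq> {0..<n}"
    proof
      fix k assume "k \<in> reachmap s v0"
      then obtain u where "(dstep s)\<^sup>*\<^sup>* v0 u" "k \<in> s u" by (auto simp: reachmap_def)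
      moreover have "u \<in> cube n" using rt_cube[OF \<open>(dstep s)\<^sup>*\<^sup>* v0 u\<close> O assms(2)] .
      ultimately show "k \<in> {0..<n}" using O unfolding is_orientation_def by blast
    qed
  qed simp
  then show ?thesis using inv[of rho] card_mono by (metis order_refl)
qed

end
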